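(* Let $\mathcal{N}_1:\mathcal{L}(\mathcal{H}_{a1})\to\mathcal{L}(\mathcal{H}_{b1})$ and $\mathcal{N}_2:\mathcal{L}(\mathcal{H}_{a2})\to\mathcal{L}(\mathcal{H}_{b2})$ be quantum channels with $\dim\mathcal{H}_{ai}=\dim\mathcal{H}_{bi}=d_i$, and let $0<t\le1$. If $t\ge\max(1/d_1^2,1/d_2^2)$ then $$\mathcal{O}_t(\mathcal{N}_1\otimes\mathcal{N}_2)\ge\mathcal{O}_t(\mathcal{N}_1)\,\mathcal{O}_t(\mathcal{N}_2),$$ and if $\sqrt t\ge\max(1/d_1^2,1/d_2^2)$ then $$\mathcal{O}_t(\mathcal{N}_1\otimes\mathcal{N}_2)\ge\mathcal{O}_{\sqrt t}(\mathcal{N}_1)\,\mathcal{O}_{\sqrt t}(\mathcal{N}_2).$$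
   Context: For a channel $\mathcal{N}:\mathcal{L}(\mathcal{H}_a)\to\mathcal{L}(\mathcal{H}_b)$ with $\dim\mathcal{H}_a=\dim\mathcal{H}_b=\dim\mathcal{H}_r=d$, define $\mathcal{O}_s(\mathcal{N})=\max\{\langle\phi_{rb}|(\mathrm{id}_r\otimes\mathcal{N})(\rho_{ra})|\phi_{rb}\rangle:\ \rho_{ra}\succeq0,\ \mathrm{Tr}\rho_{ra}=1,\ \mathrm{Tr}(\rho_{ra}^2)\le s\}$, where $|\phi_{rb}\rangle=\frac1{\sqrt d}\sum_i|\alpha_i\rangle_r|\alpha_i\rangle_b$. For $\mathcal{N}_1\otimes\mathcal{N}_2$ the reference is $\mathcal{H}_r=\mathcal{H}_{r1}\otimes\mathcal{H}_{r2}$ and the maximally entangled state is $\phi_{r1b1}\otimes\phi_{r2b2}$. *)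

theory Defs
  imports "Jordan_Normal_Form.Matrix"
begin

(* Operators on a d-dimensional Hilbert space are d x d complex matrices
   (w.r.t. a fixed orthonormal basis, the standard basis).
   Composite systems H_1 (x) H_2 use the index convention  (i, k) |-> i * d2 + k. *)

definition mtrace :: "complex mat \<Rightarrow> complex" where
  "mtrace A = (\<Sum>i<dim_row A. A $$ (i, i))"

definition psd :: "nat \<Rightarrow> complex mat \<Rightarrow> bool" where
  "psd n A \<longleftrightarrow> A \<in> carrier_mat n n \<and>
     (\<forall>i<n. \<forall>j<n. A $$ (i, j) = cnj (A $$ (j, i))) \<and>
     (\<forall>v \<in> carrier_vec n. 0 \<le> Re ((A *\<^sub>v v) \<bullet>c v))"

definition density_op :: "nat \<Rightarrow> complex mat \<Rightarrow> bool" where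
  "density_op n \<rho> \<longleftrightarrow> psd n \<rho> \<and> mtrace \<rho> = 1"

definition kron :: "complex mat \<Rightarrow> complex mat \<Rightarrow> complex mat" where
  "kron A B = mat (dim_row A * dim_row B) (dim_col A * dim_col B)
     (\<lambda>(i, j). A $$ (i div dim_row B, j div dim_col B) * B $$ (i mod dim_row B, j mod dim_col B))"

definition unit_mat :: "nat \<Rightarrow> nat \<Rightarrow> nat \<Rightarrow> complex mat" where
  "unit_mat d i j = mat d d (\<lambda>(a, b). if a = i \<and> b = j then 1 else 0)"

definition block :: "nat \<Rightarrow> complex mat \<Rightarrow> nat \<Rightarrow> nat \<Rightarrow> complex mat" where
  "block d X i j = mat d d (\<lambda>(a, b). X $$ (i * d + a, j * d + b))"

definition id_tensor :: "nat \<Rightarrow> nat \<Rightarrow> (complex mat \<Rightarrow> complex mat) \<Rightarrow> complex mat \<Rightarrow> complex mat" where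
  "id_tensor k d N X = mat (k * d) (k * d)
     (\<lambda>(r, c). N (block d X (r div d) (c div d)) $$ (r mod d, c mod d))"

definition channel :: "nat \<Rightarrow> (complex mat \<Rightarrow> complex mat) \<Rightarrow> bool" where
  "channel d N \<longleftrightarrow>
     (\<forall>A \<in> carrier_mat d d. N A \<in> carrier_mat d d) \<and>
     (\<forall>A \<in> carrier_mat d d. \<forall>B \<in> carrier_mat d d. N (A + B) = N A + N B) \<and>
     (\<forall>A \<in> carrier_mat d d. \<forall>c. N (c \<cdot>\<^sub>m A) = c \<cdot>\<^sub>m N A) \<and>
     (\<forall>k X. psd (k * d) X \<longrightarrow> psd (k * d) (id_tensor k d N X)) \<and>
     (\<forall>A \<in> carrier_mat d d. mtrace (N A) = mtrace A)"

(* N1 (x) N2, defined by linear extension of  E_ij (x) E_kl |-> N1(E_ij) (x) N2(E_kl) *)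
definition chan_tensor :: "nat \<Rightarrow> nat \<Rightarrow> (complex mat \<Rightarrow> complex mat) \<Rightarrow> (complex mat \<Rightarrow> complex mat)
    \<Rightarrow> complex mat \<Rightarrow> complex mat" where
  "chan_tensor d1 d2 N1 N2 X = mat (d1 * d2) (d1 * d2) (\<lambda>(r, c).
     \<Sum>i<d1. \<Sum>j<d1. \<Sum>k<d2. \<Sum>l<d2.
        X $$ (i * d2 + k, j * d2 + l) *
        kron (N1 (unit_mat d1 i j)) (N2 (unit_mat d2 k l)) $$ (r, c))"

definition max_ent :: "nat \<Rightarrow> complex vec" where
  "max_ent d = vec (d * d) (\<lambda>n. if n div d = n mod d then complex_of_real (1 / sqrt (real d)) else 0)"

definition O_val :: "nat \<Rightarrow> (complex mat \<Rightarrow> complex mat) \<Rightarrow> real \<Rightarrow> real" where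
  "O_val d N s = Sup {Re ((id_tensor d d N \<rho> *\<^sub>v max_ent d) \<bullet>c max_ent d) | \<rho>.
      density_op (d * d) \<rho> \<and> Re (mtrace (\<rho> * \<rho>)) \<le> s}"

end

theory Submission
  imports Defs
begin


lemma sum_split_mult:
  fixes g :: "nat \<Rightarrow> 'a::comm_monoid_add"
  shows "(\<Sum>n<a*b. g n) = (\<Sum>i<a. \<Sum>j<b. g (i*b+j))"
proof (induction a)
  case 0 then show ?case by simp
next
  case (Suc a)
  have "{..<Suc a * b} = {..<a*b} \<union> {a*b..<a*b+b}" by auto
  then have "(\<Sum>n<Suc a*b. g n) = (\<Sum>n<a*b. g n) + (\<Sum>n\<in>{a*b..<a*b+b}. g n)"
    by (simp add: sum.union_disjoint ivl_disj_int)
  also have "(\<Sum>n\<in>{a*b..<a*b+b}. g n) = (\<Sum>j<b. g (a*b+j))"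
    using sum.shift_bounds_nat_ivl[of g 0 "a*b" b] by (simp add: lessThan_atLeast0 add.commute)
  finally show ?case using Suc by simp
qed

lemma qf_expand:
  assumes "A \<in> carrier_mat n n" "v \<in> carrier_vec n"
  shows "(A *\<^sub>v v) \<bullet>c v = (\<Sum>p<n. \<Sum>q<n. A $$ (p,q) * v $ q * cnj (v $ p))"
proof -
  have "(A *\<^sub>v v) \<bullet>c v = (\<Sum>p<n. (\<Sum>q<n. A $$ (p,q) * v $ q) * cnj (v $ p))"
    using assms unfolding scalar_prod_def mult_mat_vec_def conjugate_vec_def row_def
    by (simp add: lessThan_atLeast0)
  also have "\<dots> = (\<Sum>p<n. \<Sum>q<n. A $$ (p,q) * v $ q * cnj (v $ p))"
    by (simp add: sum_distrib_right)
  finally show ?thesis .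
qed

definition fpsd :: "nat \<Rightarrow> (nat \<Rightarrow> nat \<Rightarrow> complex) \<Rightarrow> bool" where
  "fpsd n f \<longleftrightarrow> (\<forall>p<n. \<forall>q<n. f p q = cnj (f q p)) \<and>
     (\<forall>v. 0 \<le> Re (\<Sum>p<n. \<Sum>q<n. f p q * v q * cnj (v p)))"

lemma psd_imp_fpsd: assumes a: "psd n A" shows "A \<in> carrier_mat n n" "fpsd n (\<lambda>p q. A $$ (p,q))"
proof -
  show A: "A \<in> carrier_mat n n" using a unfolding psd_def by blast
  have pos: "0 \<le> Re (\<Sum>p<n. \<Sum>q<n. A $$ (p,q) * v q * cnj (v p))" for v
  proof -
    have "0 \<le> Re ((A *\<^sub>v vec n v) \<bullet>c vec n v)" using a vec_carrier[of n v] unfolding psd_def by blast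
    also have "(A *\<^sub>v vec n v) \<bullet>c vec n v = (\<Sum>p<n. \<Sum>q<n. A $$ (p,q) * vec n v $ q * cnj (vec n v $ p))"
      by (rule qf_expand[OF A]) simp
    also have "\<dots> = (\<Sum>p<n. \<Sum>q<n. A $$ (p,q) * v q * cnj (v p))"
      by (intro sum.cong refl) simp
    finally show ?thesis .
  qed
  have herm: "\<forall>p<n. \<forall>q<n. A $$ (p,q) = cnj (A $$ (q,p))" using a unfolding psd_def by blast
  show "fpsd n (\<lambda>p q. A $$ (p,q))"
    unfolding fpsd_def by (rule conjI[OF herm allI[OF pos]])
qed

lemma fpsd_imp_psd: assumes A: "A \<in> carrier_mat n n" and f: "fpsd n (\<lambda>p q. A $$ (p,q))"
  shows "psd n A"
proof -
  have pos: "0 \<le> Re ((A *\<^sub>v v) \<bullet>c v)" if v: "v \<in> carrier_vec n" for v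
  proof -
    have "0 \<le> Re (\<Sum>p<n. \<Sum>q<n. A $$ (p,q) * v $ q * cnj (v $ p))"
      using f unfolding fpsd_def by blast
    then show ?thesis unfolding qf_expand[OF A v] .
  qed
  have herm: "\<forall>p<n. \<forall>q<n. A $$ (p,q) = cnj (A $$ (q,p))" using f unfolding fpsd_def by blast
  show "psd n A" unfolding psd_def using A herm pos by blast
qed



lemma fpsd_gram:
  assumes "finite S" "\<forall>p<n. \<forall>q<n. f p q = (\<Sum>s\<in>S. z s p * cnj (z s q))"
  shows "fpsd n f"
proof -
  have herm: "\<forall>p<n. \<forall>q<n. f p q = cnj (f q p)"
    using assms(2) by (auto simp: mult.commute)
  have pos: "0 \<le> Re (\<Sum>p<n. \<Sum>q<n. f p q * v q * cnj (v p))" for v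
  proof -
    define w where "w s = (\<Sum>p<n. z s p * cnj (v p))" for s
    have "(\<Sum>p<n. \<Sum>q<n. f p q * v q * cnj (v p))
        = (\<Sum>p<n. \<Sum>q<n. \<Sum>s\<in>S. (z s p * cnj (v p)) * (cnj (z s q) * v q))"
      using assms(2) by (auto simp: sum_distrib_right sum_distrib_left mult_ac intro!: sum.cong)
    also have "\<dots> = (\<Sum>p<n. \<Sum>s\<in>S. \<Sum>q<n. (z s p * cnj (v p)) * (cnj (z s q) * v q))"
      by (rule sum.cong[OF refl], rule sum.swap)
    also have "\<dots> = (\<Sum>s\<in>S. \<Sum>p<n. \<Sum>q<n. (z s p * cnj (v p)) * (cnj (z s q) * v q))"
      by (rule sum.swap)
    also have "\<dots> = (\<Sum>s\<in>S. w s * cnj (w s))"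
      unfolding w_def cnj_sum complex_cnj_mult complex_cnj_cnj sum_product by simp
    finally have e: "(\<Sum>p<n. \<Sum>q<n. f p q * v q * cnj (v p)) = (\<Sum>s\<in>S. w s * cnj (w s))" .
    have r: "Re (\<Sum>s\<in>S. w s * cnj (w s)) = (\<Sum>s\<in>S. (Re (w s))^2 + (Im (w s))^2)"
      by (simp add: Re_sum complex_mult_cnj)
    show ?thesis unfolding e r by (intro sum_nonneg) auto
  qed
  show ?thesis unfolding fpsd_def by (rule conjI[OF herm allI[OF pos]])
qed



lemma sum_two_points:
  fixes g :: "nat \<Rightarrow> complex"
  assumes "k \<noteq> q" "k < n" "q < n"
  shows "(\<Sum>r<n. g r * (if r = k then a else if r = q then b else 0)) = g k * a + g q * b"
proof -
  have "(\<Sum>r<n. g r * (if r = k then a else if r = q then b else 0))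
      = (\<Sum>r<n. (if r = k then g k * a else 0) + (if r = q then g q * b else 0))"
    by (intro sum.cong) (auto simp: assms)
  also have "\<dots> = g k * a + g q * b" using assms by (simp add: sum.distrib)
  finally show ?thesis .
qed

lemma fpsd_pos: "fpsd n f \<Longrightarrow> 0 \<le> Re (\<Sum>p<n. \<Sum>q<n. f p q * v q * cnj (v p))"
  unfolding fpsd_def by (drule conjunct2) (erule spec)

lemma fpsd_herm: "fpsd n f \<Longrightarrow> p < n \<Longrightarrow> q < n \<Longrightarrow> f p q = cnj (f q p)"
  unfolding fpsd_def
  apply (drule conjunct1)
  apply (drule spec[of _ p], drule mp, assumption)
  apply (drule spec[of _ q], drule mp, assumption)
  apply assumption
  done

lemma fpsd_diag0:
  assumes f: "fpsd n f" and k: "k < n" and z: "f k k = 0" and q: "q < n"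
  shows "f k q = 0"
proof (rule ccontr)
  assume c: "f k q \<noteq> 0"
  then have kq: "k \<noteq> q" using z by auto
  define c where "c = f k q"
  have herm: "f q k = cnj c" using fpsd_herm[OF f q k] unfolding c_def .
  define lam where "lam = (\<bar>Re (f q q)\<bar> + 1) / (cmod c)^2"
  define a where "a = - of_real lam * c"
  define v where "v = (\<lambda>x. if x = k then a else if x = q then 1 else (0::complex))"
  have pos: "0 \<le> Re (\<Sum>p<n. \<Sum>r<n. f p r * v r * cnj (v p))" by (rule fpsd_pos[OF f])
  have inner: "(\<Sum>r<n. f p r * v r * cnj (v p)) = (f p k * a + f p q) * cnj (v p)" for p
  proof -
    have "(\<Sum>r<n. f p r * v r * cnj (v p)) = (\<Sum>r<n. f p r * v r) * cnj (v p)"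
      by (simp add: sum_distrib_right)
    also have "(\<Sum>r<n. f p r * v r) = f p k * a + f p q * 1"
      unfolding v_def by (rule sum_two_points[OF kq k q])
    finally show ?thesis by simp
  qed
  have "(\<Sum>p<n. \<Sum>r<n. f p r * v r * cnj (v p)) = (\<Sum>p<n. cnj (v p) * (f p k * a + f p q))"
    by (intro sum.cong refl) (subst inner, rule mult.commute)
  also have "\<dots> = (\<Sum>p<n. (f p k * a + f p q) * (if p = k then cnj a else if p = q then 1 else 0))"
    by (intro sum.cong) (auto simp: v_def mult.commute)
  also have "\<dots> = (f k k * a + f k q) * cnj a + (f q k * a + f q q) * 1"
    by (rule sum_two_points[OF kq k q])
  also have "\<dots> = c * cnj a + cnj c * a + f q q" using z herm by (simp add: c_def)
  finally have e: "(\<Sum>p<n. \<Sum>r<n. f p r * v r * cnj (v p)) = c * cnj a + cnj c * a + f q q" .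
  have cc: "c * cnj c = of_real ((cmod c)^2)" by (simp add: complex_mult_cnj cmod_def)
  have c0: "cmod c \<noteq> 0" using c c_def by auto
  have "c * cnj a = - of_real lam * of_real ((cmod c)^2)" unfolding a_def using cc by (simp add: mult_ac)
  also have "\<dots> = - of_real (\<bar>Re (f q q)\<bar> + 1)" unfolding lam_def using c0 by simp
  finally have e1: "c * cnj a = - of_real (\<bar>Re (f q q)\<bar> + 1)" .
  have "cnj c * a = cnj (c * cnj a)" by simp
  then have e2: "cnj c * a = - of_real (\<bar>Re (f q q)\<bar> + 1)" using e1 by simp
  have "Re (c * cnj a + cnj c * a + f q q) = Re (f q q) - 2 * (\<bar>Re (f q q)\<bar> + 1)"
    using e1 e2 by simp
  moreover have "0 \<le> Re (c * cnj a + cnj c * a + f q q)" using pos unfolding e .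
  ultimately show False using abs_ge_self[of "Re (f q q)"] abs_ge_zero[of "Re (f q q)"] by (smt (verit))
qed

lemma qf_invariant:
  assumes "\<forall>p<n. h p k = 0" "\<forall>q<n. h k q = 0"
  shows "(\<Sum>p<n. \<Sum>q<n. h p q * (v(k := x)) q * cnj ((v(k := x)) p))
       = (\<Sum>p<n. \<Sum>q<n. h p q * v q * cnj (v p))"
  using assms by (intro sum.cong refl) auto



lemma fpsd_diag_real:
  assumes f: "fpsd n f" and k: "k < n"
  shows "f k k = of_real (Re (f k k))" "0 \<le> Re (f k k)"
proof -
  have "f k k = cnj (f k k)" by (rule fpsd_herm[OF f k k])
  then have "Im (f k k) = 0" by (metis cnj.sel(2) complex_cnj_cancel_iff equation_minus_iff
      complex_cnj_zero_iff Im_complex_of_real Reals_cnj_iff complex_is_Real_iff)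
  then show "f k k = of_real (Re (f k k))" by (simp add: complex_eq_iff)
  define v where "v = (\<lambda>x. if x = k then 1 else (0::complex))"
  have "(\<Sum>p<n. \<Sum>q<n. f p q * v q * cnj (v p)) = (\<Sum>p<n. if p = k then f k k else 0)"
  proof (intro sum.cong refl)
    fix p assume "p \<in> {..<n}"
    have "(\<Sum>q<n. f p q * v q * cnj (v p)) = (\<Sum>q<n. if q = k then f p k * cnj (v p) else 0)"
      by (intro sum.cong refl) (simp add: v_def)
    also have "\<dots> = f p k * cnj (v p)" using k by simp
    finally show "(\<Sum>q<n. f p q * v q * cnj (v p)) = (if p = k then f k k else 0)"
      by (simp add: v_def)
  qed
  also have "\<dots> = f k k" using k by simp
  finally show "0 \<le> Re (f k k)" using fpsd_pos[OF f, of v] by simp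
qed



lemma fpsd_rank1_step:
  assumes f: "fpsd n f" and k: "k < n" and fk: "f k k \<noteq> 0"
    and zero: "\<forall>p<n. \<forall>q<n. (p < k \<or> q < k) \<longrightarrow> f p q = 0"
  defines "r \<equiv> Re (f k k)"
  defines "w \<equiv> (\<lambda>p. f p k / of_real (sqrt r))"
  defines "g \<equiv> (\<lambda>p q. f p q - w p * cnj (w q))"
  shows "fpsd n g" "\<forall>p<n. \<forall>q<n. (p < Suc k \<or> q < Suc k) \<longrightarrow> g p q = 0"
proof -
  have fkk: "f k k = of_real r" unfolding r_def by (rule fpsd_diag_real(1)[OF f k])
  have r0: "r > 0"
  proof -
    have "r \<noteq> 0" using fk fkk by auto
    then show ?thesis using fpsd_diag_real(2)[OF f k] unfolding r_def by linarith
  qed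
  have sr: "of_real (sqrt r) * of_real (sqrt r) = (of_real r :: complex)"
    using r0 by (simp flip: of_real_mult)
  have ww: "w p * cnj (w q) = f p k * f k q / of_real r" if "q < n" for p q
  proof -
    have "w p * cnj (w q) = f p k * cnj (f q k) / (of_real (sqrt r) * of_real (sqrt r))"
      unfolding w_def by simp
    also have "cnj (f q k) = f k q" using fpsd_herm[OF f k that] by simp
    finally show ?thesis using sr by simp
  qed
  have gk1: "g k q = 0" if "q < n" for q
    unfolding g_def using ww[OF that, of k] fkk r0 by simp
  have gk2: "g p k = 0" if "p < n" for p
    unfolding g_def using ww[OF k, of p] fkk r0 by simp
  have gz: "g p q = 0" if pn: "p < n" and qn: "q < n" and pq: "p < Suc k \<or> q < Suc k" for p q
  proof -
    consider "p = k" | "q = k" | "p < k" | "q < k" using pq by linarith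
    then show ?thesis
    proof cases
      case 1 then show ?thesis using gk1 qn by simp
    next
      case 2 then show ?thesis using gk2 pn by simp
    next
      case 3
      then have "f p q = 0" "f p k = 0" using zero pn qn k by auto
      then show ?thesis unfolding g_def w_def by simp
    next
      case 4
      then have "f p q = 0" "f k q = 0" using zero pn qn k by auto
      then show ?thesis unfolding g_def using ww[OF qn, of p] by simp
    qed
  qed
  then show "\<forall>p<n. \<forall>q<n. (p < Suc k \<or> q < Suc k) \<longrightarrow> g p q = 0" by blast
  have herm: "\<forall>p<n. \<forall>q<n. g p q = cnj (g q p)"
  proof (intro allI impI)
    fix p q assume "p < n" "q < n"
    then show "g p q = cnj (g q p)" unfolding g_def using fpsd_herm[OF f, of p q] by simp
  qed
  have pos: "0 \<le> Re (\<Sum>p<n. \<Sum>q<n. g p q * v q * cnj (v p))" for v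
  proof -
    define T where "T = (\<Sum>p<n. f p k * cnj (v p))"
    define \<delta> where "\<delta> = - cnj T / f k k"
    define u where "u = v(k := v k + \<delta>)"
    have "(\<Sum>p<n. \<Sum>q<n. g p q * v q * cnj (v p)) = (\<Sum>p<n. \<Sum>q<n. g p q * u q * cnj (u p))"
      unfolding u_def by (rule qf_invariant[symmetric]) (use gk1 gk2 in auto)
    also have "\<dots> = (\<Sum>p<n. \<Sum>q<n. f p q * u q * cnj (u p))
        - (\<Sum>p<n. \<Sum>q<n. (w p * cnj (u p)) * (cnj (w q) * u q))"
      unfolding g_def by (simp add: algebra_simps sum_subtractf)
    also have "(\<Sum>p<n. \<Sum>q<n. (w p * cnj (u p)) * (cnj (w q) * u q))
        = (\<Sum>p<n. w p * cnj (u p)) * (\<Sum>q<n. cnj (w q) * u q)"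
      by (simp add: sum_product)
    also have "(\<Sum>p<n. w p * cnj (u p)) = 0"
    proof -
      have cu: "cnj (u p) = cnj (v p) + (if p = k then cnj \<delta> else 0)" for p
        unfolding u_def by simp
      have "(\<Sum>p<n. f p k * cnj (u p)) = (\<Sum>p<n. f p k * cnj (v p) + (if p = k then f p k * cnj \<delta> else 0))"
        by (intro sum.cong refl) (simp add: cu distrib_left)
      also have "\<dots> = T + (\<Sum>p<n. if p = k then f p k * cnj \<delta> else 0)"
        by (simp only: sum.distrib T_def)
      also have "\<dots> = T + f k k * cnj \<delta>" using k by simp
      also have "\<dots> = 0" unfolding \<delta>_def using fkk r0 by simp
      finally have "(\<Sum>p<n. f p k * cnj (u p)) = 0" .
      then have "(\<Sum>p<n. f p k * cnj (u p)) / of_real (sqrt r) = 0" by simp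
      then show ?thesis unfolding w_def sum_divide_distrib by (simp add: field_simps)
    qed
    finally show ?thesis using fpsd_pos[OF f, of u] by simp
  qed
  show "fpsd n g" unfolding fpsd_def by (rule conjI[OF herm allI[OF pos]])
qed



lemma fpsd_decomp_aux:
  "fpsd n f \<Longrightarrow> (\<forall>p<n. \<forall>q<n. (p < n - j \<or> q < n - j) \<longrightarrow> f p q = 0) \<Longrightarrow>
   \<exists>(m::nat) z. \<forall>p<n. \<forall>q<n. f p q = (\<Sum>s<m. z s p * cnj (z s q))"
proof (induction j arbitrary: f)
  case 0
  then have z0: "\<forall>p<n. \<forall>q<n. f p q = 0" by simp
  show ?case
    apply (rule exI[where x="0::nat"])
    apply (rule exI[where x="\<lambda>_ _. 0"])
    using z0 by simp
next
  case (Suc j f)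
  show ?case
  proof (cases "n \<le> j")
    case True
    then have "n - Suc j = n - j" by simp
    then show ?thesis using Suc.IH[OF Suc.prems(1)] Suc.prems(2) by simp
  next
    case False
    define k where "k = n - Suc j"
    have k: "k < n" and k1: "n - j = Suc k" using False unfolding k_def by auto
    have zero: "\<forall>p<n. \<forall>q<n. (p < k \<or> q < k) \<longrightarrow> f p q = 0" using Suc.prems(2) unfolding k_def by blast
    show ?thesis
    proof (cases "f k k = 0")
      case True
      have row: "f k q = 0" if "q < n" for q by (rule fpsd_diag0[OF Suc.prems(1) k True that])
      have col: "f p k = 0" if "p < n" for p
        using fpsd_herm[OF Suc.prems(1) that k] row[OF that] by simp
      have "\<forall>p<n. \<forall>q<n. (p < n - j \<or> q < n - j) \<longrightarrow> f p q = 0"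
      proof (intro allI impI)
        fix p q assume pn: "p < n" and qn: "q < n" and pq: "p < n - j \<or> q < n - j"
        consider "p = k" | "q = k" | "p < k" | "q < k" using pq k1 by linarith
        then show "f p q = 0" using row col zero pn qn by cases auto
      qed
      then show ?thesis by (rule Suc.IH[OF Suc.prems(1)])
    next
      case False
      define r where "r = Re (f k k)"
      define w where "w = (\<lambda>p. f p k / of_real (sqrt r))"
      define g where "g = (\<lambda>p q. f p q - w p * cnj (w q))"
      have g1: "fpsd n g" and g2: "\<forall>p<n. \<forall>q<n. (p < Suc k \<or> q < Suc k) \<longrightarrow> g p q = 0"
        using fpsd_rank1_step[OF Suc.prems(1) k False zero] unfolding g_def w_def r_def by auto
      have "\<exists>(m::nat) z. \<forall>p<n. \<forall>q<n. g p q = (\<Sum>s<m. z s p * cnj (z s q))"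
        by (rule Suc.IH[OF g1]) (use g2 k1 in simp)
      then obtain m :: nat and z where mz: "\<forall>p<n. \<forall>q<n. g p q = (\<Sum>s<m. z s p * cnj (z s q))"
        by blast
      define z' where "z' = z(m := w)"
      have "f p q = (\<Sum>s<Suc m. z' s p * cnj (z' s q))" if "p < n" "q < n" for p q
      proof -
        have "(\<Sum>s<Suc m. z' s p * cnj (z' s q)) = (\<Sum>s<m. z s p * cnj (z s q)) + w p * cnj (w q)"
          unfolding z'_def by simp
        also have "\<dots> = g p q + w p * cnj (w q)" using mz that by simp
        finally show ?thesis unfolding g_def by simp
      qed
      note fz = this
      show ?thesis
        apply (rule exI[where x="Suc m"])
        apply (rule exI[where x=z'])
        using fz by blast
    qed
  qed
qed

lemma psd_decomp:
  assumes "psd n A"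
  shows "\<exists>(m::nat) z. \<forall>p<n. \<forall>q<n. A $$ (p,q) = (\<Sum>s<m. z s p * cnj (z s q))"
  using fpsd_decomp_aux[OF psd_imp_fpsd(2)[OF assms], of n] by simp



lemma divmod_simps[simp]:
  fixes i j b :: nat
  assumes "j < b"
  shows "(i*b+j) div b = i" "(i*b+j) mod b = j"
  using assms by auto

lemma idx_bound:
  fixes i j a b :: nat
  assumes "i < a" "j < b" shows "i*b+j < a*b"
proof -
  have "i*b+j < (i+1)*b" using assms by simp
  also have "\<dots> \<le> a*b" using assms by (intro mult_le_mono1) simp
  finally show ?thesis .
qed

lemma chan_lin:
  assumes ch: "channel d N" and Y: "Y \<in> carrier_mat d d" and a: "a < d" and b: "b < d"
  shows "N Y $$ (a,b) = (\<Sum>p<d. \<Sum>q<d. Y $$ (p,q) * N (unit_mat d p q) $$ (a,b))"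
proof -
  have Nc: "N A \<in> carrier_mat d d" if "A \<in> carrier_mat d d" for A using ch that unfolding channel_def by blast
  have Nadd: "N (A + B) = N A + N B" if "A \<in> carrier_mat d d" "B \<in> carrier_mat d d" for A B
    using ch that unfolding channel_def by blast
  have Nsc: "N (c \<cdot>\<^sub>m A) = c \<cdot>\<^sub>m N A" if "A \<in> carrier_mat d d" for A c
    using ch that unfolding channel_def by blast
  define Yk where "Yk k = mat d d (\<lambda>(p,q). if p*d+q < k then Y $$ (p,q) else 0)" for k
  have Ykc: "Yk k \<in> carrier_mat d d" for k unfolding Yk_def by simp
  have Ec: "unit_mat d p q \<in> carrier_mat d d" for p q unfolding unit_mat_def by simp
  have d0: "0 < d" using a by simp
  have step: "N (Yk k) $$ (a,b) = (\<Sum>n<k. Y $$ (n div d, n mod d) * N (unit_mat d (n div d) (n mod d)) $$ (a,b))"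
    if "k \<le> d*d" for k
    using that
  proof (induction k)
    case 0
    have z: "Yk 0 = 0 \<cdot>\<^sub>m Yk 0" unfolding Yk_def by (rule eq_matI) auto
    have "N (Yk 0) = 0 \<cdot>\<^sub>m N (Yk 0)" by (subst z, rule Nsc[OF Ykc])
    also have "\<dots> $$ (a,b) = 0" using Nc[OF Ykc[of 0]] a b by simp
    finally show ?case by simp
  next
    case (Suc k)
    define p0 where "p0 = k div d"
    define q0 where "q0 = k mod d"
    have p0: "p0 < d" using Suc.prems d0 unfolding p0_def by (simp add: less_mult_imp_div_less)
    have q0: "q0 < d" using d0 unfolding q0_def by simp
    have kk: "k = p0 * d + q0" unfolding p0_def q0_def by simp
    have e: "Yk (Suc k) = Yk k + Y $$ (p0,q0) \<cdot>\<^sub>m unit_mat d p0 q0"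
    proof (rule eq_matI)
      fix i j assume i: "i < dim_row (Yk k + Y $$ (p0, q0) \<cdot>\<^sub>m unit_mat d p0 q0)"
        and j: "j < dim_col (Yk k + Y $$ (p0, q0) \<cdot>\<^sub>m unit_mat d p0 q0)"
      then have i: "i < d" and j: "j < d" by (auto simp: Yk_def unit_mat_def)
      have iff: "i*d+j = k \<longleftrightarrow> i = p0 \<and> j = q0"
      proof
        assume "i*d+j = k"
        then show "i = p0 \<and> j = q0" unfolding p0_def q0_def using j by auto
      qed (simp add: kk)
      show "Yk (Suc k) $$ (i, j) = (Yk k + Y $$ (p0, q0) \<cdot>\<^sub>m unit_mat d p0 q0) $$ (i, j)"
        using i j iff by (auto simp: Yk_def unit_mat_def)
    qed (auto simp: Yk_def unit_mat_def)
    have "N (Yk (Suc k)) $$ (a,b) = N (Yk k) $$ (a,b) + Y $$ (p0,q0) * N (unit_mat d p0 q0) $$ (a,b)"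
    proof -
      have sc: "Y $$ (p0,q0) \<cdot>\<^sub>m unit_mat d p0 q0 \<in> carrier_mat d d" using Ec by simp
      have "N (Yk (Suc k)) = N (Yk k) + Y $$ (p0,q0) \<cdot>\<^sub>m N (unit_mat d p0 q0)"
        unfolding e using Nadd[OF Ykc[of k] sc] Nsc[OF Ec] by simp
      then show ?thesis using Nc[OF Ykc[of k]] Nc[OF Ec[of p0 q0]] a b by simp
    qed
    then show ?case using Suc by (simp add: p0_def q0_def)
  qed
  have "Yk (d*d) = Y"
  proof (rule eq_matI)
    fix i j assume "i < dim_row Y" "j < dim_col Y"
    then have "i < d" "j < d" using Y by auto
    then have "i*d+j < d*d" by (rule idx_bound)
    then show "Yk (d*d) $$ (i,j) = Y $$ (i,j)" using \<open>i < d\<close> \<open>j < d\<close> by (simp add: Yk_def)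
  qed (use Y in \<open>auto simp: Yk_def\<close>)
  then have "N Y $$ (a,b) = (\<Sum>n<d*d. Y $$ (n div d, n mod d) * N (unit_mat d (n div d) (n mod d)) $$ (a,b))"
    using step[of "d*d"] by simp
  also have "\<dots> = (\<Sum>p<d. \<Sum>q<d. Y $$ (p,q) * N (unit_mat d p q) $$ (a,b))"
    by (subst sum_split_mult) simp
  finally show ?thesis .
qed



lemma sum_delta_mult:
  fixes f :: "nat \<Rightarrow> complex"
  assumes "k < n"
  shows "(\<Sum>i<n. f i * (if i = k then c else 0)) = f k * c"
proof -
  have "(\<Sum>i<n. f i * (if i = k then c else 0)) = (\<Sum>i<n. if i = k then f k * c else 0)"
    by (intro sum.cong) auto
  also have "\<dots> = f k * c" using assms by simp
  finally show ?thesis .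
qed

lemma max_ent_idx:
  assumes "a < d" "a' < d"
  shows "max_ent d $ (a*d+a') = (if a' = a then complex_of_real (1 / sqrt (real d)) else 0)"
proof -
  have "a*d+a' < d*d" using assms by (rule idx_bound)
  then show ?thesis unfolding max_ent_def using assms by auto
qed

lemma fid_formula:
  assumes \<rho>: "\<rho> \<in> carrier_mat (d*d) (d*d)" and d0: "0 < d"
    and lin: "\<And>Y a b. Y \<in> carrier_mat d d \<Longrightarrow> a < d \<Longrightarrow> b < d \<Longrightarrow>
       N Y $$ (a,b) = (\<Sum>p<d. \<Sum>q<d. Y $$ (p,q) * K p q a b)"
  shows "(id_tensor d d N \<rho> *\<^sub>v max_ent d) \<bullet>c max_ent d
       = (\<Sum>a<d. \<Sum>b<d. \<Sum>p<d. \<Sum>q<d. \<rho> $$ (a*d+p, b*d+q) * K p q a b) / of_nat d"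
proof -
  define X where "X = id_tensor d d N \<rho>"
  define \<phi> where "\<phi> = max_ent d"
  define s where "s = complex_of_real (1 / sqrt (real d))"
  have Xc: "X \<in> carrier_mat (d*d) (d*d)" unfolding X_def id_tensor_def by simp
  have \<phi>c: "\<phi> \<in> carrier_vec (d*d)" unfolding \<phi>_def max_ent_def by simp
  have \<phi>i: "\<phi> $ (a*d+a') = (if a' = a then s else 0)" if "a < d" "a' < d" for a a'
    unfolding \<phi>_def s_def using max_ent_idx[OF that] .
  have ss: "s * cnj s = 1 / of_nat d"
    unfolding s_def using d0 by (simp flip: of_real_mult add: of_real_divide)
  have Xe: "X $$ (a*d+a, b*d+b) = (\<Sum>p<d. \<Sum>q<d. \<rho> $$ (a*d+p, b*d+q) * K p q a b)"
    if a: "a < d" and b: "b < d" for a b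
  proof -
    have "a*d+a < d*d" "b*d+b < d*d" using a b by (auto intro: idx_bound)
    then have "X $$ (a*d+a, b*d+b) = N (block d \<rho> a b) $$ (a, b)"
      unfolding X_def id_tensor_def using a b by simp
    also have "\<dots> = (\<Sum>p<d. \<Sum>q<d. block d \<rho> a b $$ (p,q) * K p q a b)"
      by (rule lin) (auto simp: block_def a b)
    also have "\<dots> = (\<Sum>p<d. \<Sum>q<d. \<rho> $$ (a*d+p, b*d+q) * K p q a b)"
      by (intro sum.cong refl) (simp add: block_def)
    finally show ?thesis .
  qed
  have inner: "(\<Sum>c<d*d. X $$ (r,c) * \<phi> $ c) = (\<Sum>b<d. X $$ (r, b*d+b) * s)" for r
  proof -
    have "(\<Sum>c<d*d. X $$ (r,c) * \<phi> $ c) = (\<Sum>b<d. \<Sum>b'<d. X $$ (r, b*d+b') * \<phi> $ (b*d+b'))"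
      by (rule sum_split_mult)
    also have "\<dots> = (\<Sum>b<d. \<Sum>b'<d. X $$ (r, b*d+b') * (if b' = b then s else 0))"
      by (intro sum.cong refl) (simp add: \<phi>i)
    also have "\<dots> = (\<Sum>b<d. X $$ (r, b*d+b) * s)"
      by (intro sum.cong refl) (rule sum_delta_mult, simp)
    finally show ?thesis .
  qed
  have "(X *\<^sub>v \<phi>) \<bullet>c \<phi> = (\<Sum>r<d*d. \<Sum>c<d*d. X $$ (r,c) * \<phi> $ c * cnj (\<phi> $ r))"
    by (rule qf_expand[OF Xc \<phi>c])
  also have "\<dots> = (\<Sum>r<d*d. (\<Sum>b<d. X $$ (r, b*d+b) * s) * cnj (\<phi> $ r))"
    by (intro sum.cong refl) (simp only: inner[symmetric] sum_distrib_right)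
  also have "\<dots> = (\<Sum>a<d. \<Sum>a'<d. (\<Sum>b<d. X $$ (a*d+a', b*d+b) * s) * cnj (\<phi> $ (a*d+a')))"
    by (rule sum_split_mult)
  also have "\<dots> = (\<Sum>a<d. \<Sum>a'<d. (\<Sum>b<d. X $$ (a*d+a', b*d+b) * s) * (if a' = a then cnj s else 0))"
    by (intro sum.cong refl) (simp add: \<phi>i)
  also have "\<dots> = (\<Sum>a<d. (\<Sum>b<d. X $$ (a*d+a, b*d+b) * s) * cnj s)"
    by (intro sum.cong refl) (rule sum_delta_mult, simp)
  also have "\<dots> = (\<Sum>a<d. \<Sum>b<d. X $$ (a*d+a, b*d+b) * (s * cnj s))"
    by (simp add: sum_distrib_right mult.assoc)
  also have "\<dots> = (\<Sum>a<d. \<Sum>b<d. (\<Sum>p<d. \<Sum>q<d. \<rho> $$ (a*d+p, b*d+q) * K p q a b) / of_nat d)"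
    by (intro sum.cong refl) (simp add: Xe ss)
  also have "\<dots> = (\<Sum>a<d. \<Sum>b<d. \<Sum>p<d. \<Sum>q<d. \<rho> $$ (a*d+p, b*d+q) * K p q a b) / of_nat d"
    by (simp add: sum_divide_distrib)
  finally show ?thesis unfolding X_def \<phi>_def .
qed



lemma prod1:
  fixes X Y :: "nat \<Rightarrow> complex"
  assumes "0 < d2"
  shows "(\<Sum>a<d1*d2. X (a div d2) * Y (a mod d2)) = (\<Sum>a<d1. X a) * (\<Sum>b<d2. Y b)"
proof -
  have "(\<Sum>a<d1*d2. X (a div d2) * Y (a mod d2)) = (\<Sum>i<d1. \<Sum>j<d2. X ((i*d2+j) div d2) * Y ((i*d2+j) mod d2))"
    by (rule sum_split_mult)
  also have "\<dots> = (\<Sum>i<d1. \<Sum>j<d2. X i * Y j)"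
    by (intro sum.cong refl) simp
  also have "\<dots> = (\<Sum>a<d1. X a) * (\<Sum>b<d2. Y b)" by (simp add: sum_product)
  finally show ?thesis .
qed

lemma prod4:
  fixes F1 F2 :: "nat \<Rightarrow> nat \<Rightarrow> nat \<Rightarrow> nat \<Rightarrow> complex"
  assumes d2: "0 < d2"
  shows "(\<Sum>a<d1*d2. \<Sum>b<d1*d2. \<Sum>p<d1*d2. \<Sum>q<d1*d2.
            F1 (a div d2) (b div d2) (p div d2) (q div d2) * F2 (a mod d2) (b mod d2) (p mod d2) (q mod d2))
       = (\<Sum>a<d1. \<Sum>b<d1. \<Sum>p<d1. \<Sum>q<d1. F1 a b p q) * (\<Sum>a<d2. \<Sum>b<d2. \<Sum>p<d2. \<Sum>q<d2. F2 a b p q)"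
proof -
  have s1: "(\<Sum>q<d1*d2. F1 (a div d2) (b div d2) (p div d2) (q div d2) * F2 (a mod d2) (b mod d2) (p mod d2) (q mod d2))
     = (\<Sum>q<d1. F1 (a div d2) (b div d2) (p div d2) q) * (\<Sum>q<d2. F2 (a mod d2) (b mod d2) (p mod d2) q)" for a b p
    by (rule prod1[OF d2, where X = "\<lambda>q. F1 (a div d2) (b div d2) (p div d2) q" and Y = "\<lambda>q. F2 (a mod d2) (b mod d2) (p mod d2) q"])
  have s2: "(\<Sum>p<d1*d2. (\<Sum>q<d1. F1 (a div d2) (b div d2) (p div d2) q) * (\<Sum>q<d2. F2 (a mod d2) (b mod d2) (p mod d2) q))
     = (\<Sum>p<d1. \<Sum>q<d1. F1 (a div d2) (b div d2) p q) * (\<Sum>p<d2. \<Sum>q<d2. F2 (a mod d2) (b mod d2) p q)" for a b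
    by (rule prod1[OF d2, where X = "\<lambda>p. \<Sum>q<d1. F1 (a div d2) (b div d2) p q" and Y = "\<lambda>p. \<Sum>q<d2. F2 (a mod d2) (b mod d2) p q"])
  have s3: "(\<Sum>b<d1*d2. (\<Sum>p<d1. \<Sum>q<d1. F1 (a div d2) (b div d2) p q) * (\<Sum>p<d2. \<Sum>q<d2. F2 (a mod d2) (b mod d2) p q))
     = (\<Sum>b<d1. \<Sum>p<d1. \<Sum>q<d1. F1 (a div d2) b p q) * (\<Sum>b<d2. \<Sum>p<d2. \<Sum>q<d2. F2 (a mod d2) b p q)" for a
    by (rule prod1[OF d2, where X = "\<lambda>b. \<Sum>p<d1. \<Sum>q<d1. F1 (a div d2) b p q" and Y = "\<lambda>b. \<Sum>p<d2. \<Sum>q<d2. F2 (a mod d2) b p q"])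
  have s4: "(\<Sum>a<d1*d2. (\<Sum>b<d1. \<Sum>p<d1. \<Sum>q<d1. F1 (a div d2) b p q) * (\<Sum>b<d2. \<Sum>p<d2. \<Sum>q<d2. F2 (a mod d2) b p q))
     = (\<Sum>a<d1. \<Sum>b<d1. \<Sum>p<d1. \<Sum>q<d1. F1 a b p q) * (\<Sum>a<d2. \<Sum>b<d2. \<Sum>p<d2. \<Sum>q<d2. F2 a b p q)"
    by (rule prod1[OF d2, where X = "\<lambda>a. \<Sum>b<d1. \<Sum>p<d1. \<Sum>q<d1. F1 a b p q" and Y = "\<lambda>a. \<Sum>b<d2. \<Sum>p<d2. \<Sum>q<d2. F2 a b p q"])
  show ?thesis by (simp only: s1 s2 s3 s4)
qed

lemma kron_entry:
  assumes A: "A \<in> carrier_mat d1 d1" and B: "B \<in> carrier_mat d2 d2"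
    and i: "i < d1*d2" and j: "j < d1*d2"
  shows "kron A B $$ (i,j) = A $$ (i div d2, j div d2) * B $$ (i mod d2, j mod d2)"
  using A B i j unfolding kron_def by simp

definition KT :: "nat \<Rightarrow> nat \<Rightarrow> (complex mat \<Rightarrow> complex mat) \<Rightarrow> (complex mat \<Rightarrow> complex mat)
   \<Rightarrow> nat \<Rightarrow> nat \<Rightarrow> nat \<Rightarrow> nat \<Rightarrow> complex" where
  "KT d1 d2 N1 N2 p q a b = N1 (unit_mat d1 (p div d2) (q div d2)) $$ (a div d2, b div d2)
       * N2 (unit_mat d2 (p mod d2) (q mod d2)) $$ (a mod d2, b mod d2)"

lemma ct_lin:
  assumes ch1: "channel d1 N1" and ch2: "channel d2 N2" and d2: "0 < d2"
    and a: "a < d1*d2" and b: "b < d1*d2"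
  shows "chan_tensor d1 d2 N1 N2 Y $$ (a,b)
     = (\<Sum>p<d1*d2. \<Sum>q<d1*d2. Y $$ (p,q) * KT d1 d2 N1 N2 p q a b)"
proof -
  have Nc1: "N1 (unit_mat d1 i j) \<in> carrier_mat d1 d1" for i j
    using ch1 unfolding channel_def unit_mat_def by simp
  have Nc2: "N2 (unit_mat d2 i j) \<in> carrier_mat d2 d2" for i j
    using ch2 unfolding channel_def unit_mat_def by simp
  have "chan_tensor d1 d2 N1 N2 Y $$ (a,b) = (\<Sum>i<d1. \<Sum>j<d1. \<Sum>k<d2. \<Sum>l<d2.
        Y $$ (i * d2 + k, j * d2 + l) * kron (N1 (unit_mat d1 i j)) (N2 (unit_mat d2 k l)) $$ (a, b))"
    unfolding chan_tensor_def using a b by simp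
  also have "\<dots> = (\<Sum>i<d1. \<Sum>j<d1. \<Sum>k<d2. \<Sum>l<d2.
        Y $$ (i * d2 + k, j * d2 + l) * KT d1 d2 N1 N2 (i*d2+k) (j*d2+l) a b)"
    by (intro sum.cong refl) (simp add: kron_entry[OF Nc1 Nc2 a b] KT_def)
  also have "\<dots> = (\<Sum>i<d1. \<Sum>k<d2. \<Sum>j<d1. \<Sum>l<d2.
        Y $$ (i * d2 + k, j * d2 + l) * KT d1 d2 N1 N2 (i*d2+k) (j*d2+l) a b)"
    by (rule sum.cong[OF refl], rule sum.swap)
  also have "\<dots> = (\<Sum>p<d1*d2. \<Sum>q<d1*d2. Y $$ (p,q) * KT d1 d2 N1 N2 p q a b)"
    by (simp only: sum_split_mult)
  finally show ?thesis .
qed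



definition pidx1 :: "nat \<Rightarrow> nat \<Rightarrow> nat \<Rightarrow> nat" where
  "pidx1 d1 d2 n = (n div (d1*d2) div d2) * d1 + (n mod (d1*d2) div d2)"
definition pidx2 :: "nat \<Rightarrow> nat \<Rightarrow> nat \<Rightarrow> nat" where
  "pidx2 d1 d2 n = (n div (d1*d2) mod d2) * d2 + (n mod (d1*d2) mod d2)"
definition prod_state :: "nat \<Rightarrow> nat \<Rightarrow> complex mat \<Rightarrow> complex mat \<Rightarrow> complex mat" where
  "prod_state d1 d2 \<rho>1 \<rho>2 = mat (d1*d2*(d1*d2)) (d1*d2*(d1*d2)) (\<lambda>(n,m).
     \<rho>1 $$ (pidx1 d1 d2 n, pidx1 d1 d2 m) * \<rho>2 $$ (pidx2 d1 d2 n, pidx2 d1 d2 m))"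

lemma div_bound: fixes n a b :: nat assumes "n < a*b" shows "n div b < a"
  using assms by (simp add: less_mult_imp_div_less)

lemma pidx_bounds:
  assumes d1: "0 < d1" and d2: "0 < d2" and n: "n < d1*d2*(d1*d2)"
  shows "pidx1 d1 d2 n < d1*d1" "pidx2 d1 d2 n < d2*d2"
proof -
  have D: "0 < d1*d2" using d1 d2 by simp
  have P: "n div (d1*d2) < d1*d2" using n by (rule div_bound)
  have Q: "n mod (d1*d2) < d1*d2" using D by simp
  have P1: "n div (d1*d2) div d2 < d1" using P by (rule div_bound)
  have Q1: "n mod (d1*d2) div d2 < d1" using Q by (rule div_bound)
  show "pidx1 d1 d2 n < d1*d1" unfolding pidx1_def using P1 Q1 by (rule idx_bound)
  show "pidx2 d1 d2 n < d2*d2" unfolding pidx2_def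
    by (rule idx_bound) (use d2 in simp_all)
qed

lemma pidx_at:
  assumes a: "a < d1*d2" and p: "p < d1*d2"
  shows "pidx1 d1 d2 (a*(d1*d2)+p) = (a div d2)*d1 + p div d2"
        "pidx2 d1 d2 (a*(d1*d2)+p) = (a mod d2)*d2 + p mod d2"
  unfolding pidx1_def pidx2_def using p by simp_all

lemma reindex_pidx:
  fixes G :: "nat \<Rightarrow> nat \<Rightarrow> complex"
  assumes d1: "0 < d1" and d2: "0 < d2"
  shows "(\<Sum>n<d1*d2*(d1*d2). G (pidx1 d1 d2 n) (pidx2 d1 d2 n)) = (\<Sum>p<d1*d1. \<Sum>q<d2*d2. G p q)"
proof -
  have "(\<Sum>n<d1*d2*(d1*d2). G (pidx1 d1 d2 n) (pidx2 d1 d2 n))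
      = (\<Sum>P<d1*d2. \<Sum>Q<d1*d2. G (pidx1 d1 d2 (P*(d1*d2)+Q)) (pidx2 d1 d2 (P*(d1*d2)+Q)))"
    by (rule sum_split_mult)
  also have "\<dots> = (\<Sum>P<d1*d2. \<Sum>Q<d1*d2. G ((P div d2)*d1 + Q div d2) ((P mod d2)*d2 + Q mod d2))"
    by (intro sum.cong refl) (simp add: pidx_at)
  also have "\<dots> = (\<Sum>P<d1*d2. \<Sum>i<d1. \<Sum>k<d2. G ((P div d2)*d1 + i) ((P mod d2)*d2 + k))"
    by (rule sum.cong[OF refl], subst sum_split_mult) (use d2 in simp)
  also have "\<dots> = (\<Sum>a1<d1. \<Sum>a2<d2. \<Sum>i<d1. \<Sum>k<d2. G (a1*d1 + i) (a2*d2 + k))"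
    by (subst sum_split_mult) (use d2 in simp)
  also have "\<dots> = (\<Sum>a1<d1. \<Sum>i<d1. \<Sum>a2<d2. \<Sum>k<d2. G (a1*d1 + i) (a2*d2 + k))"
    by (rule sum.cong[OF refl], rule sum.swap)
  also have "\<dots> = (\<Sum>p<d1*d1. \<Sum>q<d2*d2. G p q)"
    by (simp only: sum_split_mult)
  finally show ?thesis .
qed

lemma mtrace_sq:
  assumes "A \<in> carrier_mat N N"
  shows "mtrace (A*A) = (\<Sum>n<N. \<Sum>m<N. A $$ (n,m) * A $$ (m,n))"
proof -
  have "mtrace (A*A) = (\<Sum>n<N. (A*A) $$ (n,n))" unfolding mtrace_def using assms by simp
  also have "\<dots> = (\<Sum>n<N. \<Sum>m<N. A $$ (n,m) * A $$ (m,n))"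
    by (intro sum.cong refl) (use assms in \<open>simp add: scalar_prod_def lessThan_atLeast0\<close>)
  finally show ?thesis .
qed

lemma purity_psd:
  assumes "psd N A"
  shows "mtrace (A*A) = of_real (\<Sum>n<N. \<Sum>m<N. (cmod (A $$ (n,m)))^2)"
proof -
  have A: "A \<in> carrier_mat N N" using assms unfolding psd_def by blast
  have herm: "\<forall>i<N. \<forall>j<N. A $$ (i,j) = cnj (A $$ (j,i))"
    by (rule conjunct1[OF conjunct2[OF assms[unfolded psd_def]]])
  have h: "A $$ (m,n) = cnj (A $$ (n,m))" if "n < N" "m < N" for n m
    using that by (intro herm[rule_format])
  have "mtrace (A*A) = (\<Sum>n<N. \<Sum>m<N. A $$ (n,m) * cnj (A $$ (n,m)))"
    unfolding mtrace_sq[OF A]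
  proof (intro sum.cong refl)
    fix n m assume "n \<in> {..<N}" "m \<in> {..<N}"
    then show "A $$ (n,m) * A $$ (m,n) = A $$ (n,m) * cnj (A $$ (n,m))" using h[of n m] by simp
  qed
  also have "\<dots> = (\<Sum>n<N. \<Sum>m<N. of_real ((cmod (A $$ (n,m)))^2))"
    by (intro sum.cong refl) (simp add: complex_mult_cnj cmod_def)
  also have "\<dots> = of_real (\<Sum>n<N. \<Sum>m<N. (cmod (A $$ (n,m)))^2)" by simp
  finally show ?thesis .
qed



lemma prod_state_carrier: "prod_state d1 d2 \<rho>1 \<rho>2 \<in> carrier_mat (d1*d2*(d1*d2)) (d1*d2*(d1*d2))"
  unfolding prod_state_def by simp

lemma prod_state_entry:
  assumes "n < d1*d2*(d1*d2)" "m < d1*d2*(d1*d2)"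
  shows "prod_state d1 d2 \<rho>1 \<rho>2 $$ (n,m) = \<rho>1 $$ (pidx1 d1 d2 n, pidx1 d1 d2 m) * \<rho>2 $$ (pidx2 d1 d2 n, pidx2 d1 d2 m)"
  unfolding prod_state_def using assms by simp

lemma prod_psd:
  assumes d1: "0 < d1" and d2: "0 < d2" and p1: "psd (d1*d1) \<rho>1" and p2: "psd (d2*d2) \<rho>2"
  shows "psd (d1*d2*(d1*d2)) (prod_state d1 d2 \<rho>1 \<rho>2)"
proof -
  obtain m1 :: nat and x where x: "\<forall>p<d1*d1. \<forall>q<d1*d1. \<rho>1 $$ (p,q) = (\<Sum>s<m1. x s p * cnj (x s q))"
    using psd_decomp[OF p1] by blast
  obtain m2 :: nat and y where y: "\<forall>p<d2*d2. \<forall>q<d2*d2. \<rho>2 $$ (p,q) = (\<Sum>s<m2. y s p * cnj (y s q))"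
    using psd_decomp[OF p2] by blast
  define z where "z = (\<lambda>(s,t) n. x s (pidx1 d1 d2 n) * y t (pidx2 d1 d2 n))"
  let ?N = "d1*d2*(d1*d2)"
  have "\<forall>n<?N. \<forall>m<?N. prod_state d1 d2 \<rho>1 \<rho>2 $$ (n,m) = (\<Sum>st\<in>{..<m1}\<times>{..<m2}. z st n * cnj (z st m))"
  proof (intro allI impI)
    fix n m assume n: "n < ?N" and m: "m < ?N"
    note b = pidx_bounds[OF d1 d2 n] pidx_bounds[OF d1 d2 m]
    have "prod_state d1 d2 \<rho>1 \<rho>2 $$ (n,m)
        = (\<Sum>s<m1. x s (pidx1 d1 d2 n) * cnj (x s (pidx1 d1 d2 m))) * (\<Sum>t<m2. y t (pidx2 d1 d2 n) * cnj (y t (pidx2 d1 d2 m)))"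
      unfolding prod_state_entry[OF n m] using x b y by simp
    also have "\<dots> = (\<Sum>s<m1. \<Sum>t<m2. (x s (pidx1 d1 d2 n) * cnj (x s (pidx1 d1 d2 m))) * (y t (pidx2 d1 d2 n) * cnj (y t (pidx2 d1 d2 m))))"
      by (rule sum_product)
    also have "\<dots> = (\<Sum>(s,t)\<in>{..<m1}\<times>{..<m2}. (x s (pidx1 d1 d2 n) * cnj (x s (pidx1 d1 d2 m))) * (y t (pidx2 d1 d2 n) * cnj (y t (pidx2 d1 d2 m))))"
      by (rule sum.cartesian_product)
    also have "\<dots> = (\<Sum>st\<in>{..<m1}\<times>{..<m2}. z st n * cnj (z st m))"
      by (intro sum.cong refl) (auto simp: z_def mult_ac)
    finally show "prod_state d1 d2 \<rho>1 \<rho>2 $$ (n,m) = (\<Sum>st\<in>{..<m1}\<times>{..<m2}. z st n * cnj (z st m))" .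
  qed
  then have "fpsd ?N (\<lambda>n m. prod_state d1 d2 \<rho>1 \<rho>2 $$ (n,m))"
    by (intro fpsd_gram[of "{..<m1}\<times>{..<m2}"]) auto
  then show ?thesis by (rule fpsd_imp_psd[OF prod_state_carrier])
qed

lemma prod_trace:
  assumes d1: "0 < d1" and d2: "0 < d2" and c1: "\<rho>1 \<in> carrier_mat (d1*d1) (d1*d1)"
    and c2: "\<rho>2 \<in> carrier_mat (d2*d2) (d2*d2)"
  shows "mtrace (prod_state d1 d2 \<rho>1 \<rho>2) = mtrace \<rho>1 * mtrace \<rho>2"
proof -
  have "mtrace (prod_state d1 d2 \<rho>1 \<rho>2) = (\<Sum>n<d1*d2*(d1*d2). \<rho>1 $$ (pidx1 d1 d2 n, pidx1 d1 d2 n) * \<rho>2 $$ (pidx2 d1 d2 n, pidx2 d1 d2 n))"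
    unfolding mtrace_def by (simp add: prod_state_def)
  also have "\<dots> = (\<Sum>p<d1*d1. \<Sum>q<d2*d2. \<rho>1 $$ (p,p) * \<rho>2 $$ (q,q))"
    by (rule reindex_pidx[OF d1 d2, where G = "\<lambda>p q. \<rho>1 $$ (p,p) * \<rho>2 $$ (q,q)"])
  also have "\<dots> = mtrace \<rho>1 * mtrace \<rho>2"
    unfolding mtrace_def using c1 c2 by (simp add: sum_product)
  finally show ?thesis .
qed

lemma prod_purity:
  assumes d1: "0 < d1" and d2: "0 < d2" and c1: "\<rho>1 \<in> carrier_mat (d1*d1) (d1*d1)"
    and c2: "\<rho>2 \<in> carrier_mat (d2*d2) (d2*d2)"
  shows "mtrace (prod_state d1 d2 \<rho>1 \<rho>2 * prod_state d1 d2 \<rho>1 \<rho>2) = mtrace (\<rho>1*\<rho>1) * mtrace (\<rho>2*\<rho>2)"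
proof -
  let ?N = "d1*d2*(d1*d2)"
  let ?i1 = "pidx1 d1 d2" and ?i2 = "pidx2 d1 d2"
  define U where "U a p = \<rho>1 $$ (a,p) * \<rho>1 $$ (p,a)" for a p
  define V where "V b q = \<rho>2 $$ (b,q) * \<rho>2 $$ (q,b)" for b q
  have "mtrace (prod_state d1 d2 \<rho>1 \<rho>2 * prod_state d1 d2 \<rho>1 \<rho>2)
     = (\<Sum>n<?N. \<Sum>m<?N. prod_state d1 d2 \<rho>1 \<rho>2 $$ (n,m) * prod_state d1 d2 \<rho>1 \<rho>2 $$ (m,n))"
    by (rule mtrace_sq[OF prod_state_carrier])
  also have "\<dots> = (\<Sum>n<?N. \<Sum>m<?N. (\<lambda>p q. U (?i1 n) p * V (?i2 n) q) (?i1 m) (?i2 m))"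
    by (intro sum.cong refl) (simp add: prod_state_entry U_def V_def mult_ac)
  also have "\<dots> = (\<Sum>n<?N. \<Sum>p<d1*d1. \<Sum>q<d2*d2. U (?i1 n) p * V (?i2 n) q)"
  proof (rule sum.cong[OF refl])
    fix n
    show "(\<Sum>m<?N. U (?i1 n) (?i1 m) * V (?i2 n) (?i2 m)) = (\<Sum>p<d1*d1. \<Sum>q<d2*d2. U (?i1 n) p * V (?i2 n) q)"
      by (rule reindex_pidx[OF d1 d2, where G = "\<lambda>p q. U (?i1 n) p * V (?i2 n) q"])
  qed
  also have "\<dots> = (\<Sum>a<d1*d1. \<Sum>b<d2*d2. \<Sum>p<d1*d1. \<Sum>q<d2*d2. U a p * V b q)"
    by (rule reindex_pidx[OF d1 d2, where G = "\<lambda>a b. \<Sum>p<d1*d1. \<Sum>q<d2*d2. U a p * V b q"])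
  also have "\<dots> = (\<Sum>a<d1*d1. \<Sum>p<d1*d1. U a p) * (\<Sum>b<d2*d2. \<Sum>q<d2*d2. V b q)"
    by (simp only: sum_product)
  also have "\<dots> = mtrace (\<rho>1*\<rho>1) * mtrace (\<rho>2*\<rho>2)"
    unfolding mtrace_sq[OF c1] mtrace_sq[OF c2] U_def V_def ..
  finally show ?thesis .
qed



definition fidc :: "nat \<Rightarrow> (complex mat \<Rightarrow> complex mat) \<Rightarrow> complex mat \<Rightarrow> complex" where
  "fidc d N \<rho> = (id_tensor d d N \<rho> *\<^sub>v max_ent d) \<bullet>c max_ent d"

lemma fid_chan:
  assumes ch: "channel d N" and c: "\<rho> \<in> carrier_mat (d*d) (d*d)" and d0: "0 < d"
  shows "fidc d N \<rho> = (\<Sum>a<d. \<Sum>b<d. \<Sum>p<d. \<Sum>q<d. \<rho> $$ (a*d+p, b*d+q) * N (unit_mat d p q) $$ (a,b)) / of_nat d"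
  unfolding fidc_def
  by (rule fid_formula[OF c d0, where K = "\<lambda>p q a b. N (unit_mat d p q) $$ (a,b)"], rule chan_lin[OF ch])

lemma prod_fid:
  assumes d1: "0 < d1" and d2: "0 < d2" and ch1: "channel d1 N1" and ch2: "channel d2 N2"
    and c1: "\<rho>1 \<in> carrier_mat (d1*d1) (d1*d1)" and c2: "\<rho>2 \<in> carrier_mat (d2*d2) (d2*d2)"
  shows "fidc (d1*d2) (chan_tensor d1 d2 N1 N2) (prod_state d1 d2 \<rho>1 \<rho>2) = fidc d1 N1 \<rho>1 * fidc d2 N2 \<rho>2"
proof -
  let ?D = "d1*d2"
  let ?P = "prod_state d1 d2 \<rho>1 \<rho>2"
  have D0: "0 < ?D" using d1 d2 by simp
  define F1 where "F1 a b p q = \<rho>1 $$ (a*d1+p, b*d1+q) * N1 (unit_mat d1 p q) $$ (a,b)" for a b p q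
  define F2 where "F2 a b p q = \<rho>2 $$ (a*d2+p, b*d2+q) * N2 (unit_mat d2 p q) $$ (a,b)" for a b p q
  have fT: "fidc ?D (chan_tensor d1 d2 N1 N2) ?P
      = (\<Sum>a<?D. \<Sum>b<?D. \<Sum>p<?D. \<Sum>q<?D. ?P $$ (a*?D+p, b*?D+q) * KT d1 d2 N1 N2 p q a b) / of_nat ?D"
    unfolding fidc_def
    by (rule fid_formula[OF prod_state_carrier D0], rule ct_lin[OF ch1 ch2 d2])
  have tm: "?P $$ (a*?D+p, b*?D+q) * KT d1 d2 N1 N2 p q a b
      = F1 (a div d2) (b div d2) (p div d2) (q div d2) * F2 (a mod d2) (b mod d2) (p mod d2) (q mod d2)"
    if a: "a < ?D" and b: "b < ?D" and p: "p < ?D" and q: "q < ?D" for a b p q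
  proof -
    have n: "a*?D+p < ?D*?D" and m: "b*?D+q < ?D*?D" using a b p q by (auto intro: idx_bound)
    show ?thesis
      unfolding prod_state_entry[OF n m] pidx_at[OF a p] pidx_at[OF b q] KT_def F1_def F2_def
      by (simp add: mult_ac)
  qed
  have "(\<Sum>a<?D. \<Sum>b<?D. \<Sum>p<?D. \<Sum>q<?D. ?P $$ (a*?D+p, b*?D+q) * KT d1 d2 N1 N2 p q a b)
      = (\<Sum>a<?D. \<Sum>b<?D. \<Sum>p<?D. \<Sum>q<?D. F1 (a div d2) (b div d2) (p div d2) (q div d2) * F2 (a mod d2) (b mod d2) (p mod d2) (q mod d2))"
    by (intro sum.cong refl) (simp add: tm)
  also have "\<dots> = (\<Sum>a<d1. \<Sum>b<d1. \<Sum>p<d1. \<Sum>q<d1. F1 a b p q) * (\<Sum>a<d2. \<Sum>b<d2. \<Sum>p<d2. \<Sum>q<d2. F2 a b p q)"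
    by (rule prod4[OF d2])
  finally have num: "(\<Sum>a<?D. \<Sum>b<?D. \<Sum>p<?D. \<Sum>q<?D. ?P $$ (a*?D+p, b*?D+q) * KT d1 d2 N1 N2 p q a b)
      = (\<Sum>a<d1. \<Sum>b<d1. \<Sum>p<d1. \<Sum>q<d1. F1 a b p q) * (\<Sum>a<d2. \<Sum>b<d2. \<Sum>p<d2. \<Sum>q<d2. F2 a b p q)" .
  have f1: "fidc d1 N1 \<rho>1 = (\<Sum>a<d1. \<Sum>b<d1. \<Sum>p<d1. \<Sum>q<d1. F1 a b p q) / of_nat d1"
    unfolding F1_def by (rule fid_chan[OF ch1 c1 d1])
  have f2: "fidc d2 N2 \<rho>2 = (\<Sum>a<d2. \<Sum>b<d2. \<Sum>p<d2. \<Sum>q<d2. F2 a b p q) / of_nat d2"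
    unfolding F2_def by (rule fid_chan[OF ch2 c2 d2])
  show ?thesis unfolding fT num f1 f2 by simp
qed



lemma norm_sum4:
  fixes f :: "nat \<Rightarrow> nat \<Rightarrow> nat \<Rightarrow> nat \<Rightarrow> complex"
  shows "cmod (\<Sum>a<d. \<Sum>b<d. \<Sum>p<d. \<Sum>q<d. f a b p q) \<le> (\<Sum>a<d. \<Sum>b<d. \<Sum>p<d. \<Sum>q<d. cmod (f a b p q))"
  apply (rule order_trans[OF norm_sum]) apply (rule sum_mono)
  apply (rule order_trans[OF norm_sum]) apply (rule sum_mono)
  apply (rule order_trans[OF norm_sum]) apply (rule sum_mono)
  apply (rule norm_sum) done

lemma fid_bound:
  assumes \<rho>: "\<rho> \<in> carrier_mat (d*d) (d*d)" and d0: "0 < d"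
    and lin: "\<And>Y a b. Y \<in> carrier_mat d d \<Longrightarrow> a < d \<Longrightarrow> b < d \<Longrightarrow>
       N Y $$ (a,b) = (\<Sum>p<d. \<Sum>q<d. Y $$ (p,q) * K p q a b)"
    and bd: "\<And>i j. i < d*d \<Longrightarrow> j < d*d \<Longrightarrow> cmod (\<rho> $$ (i,j)) \<le> 1"
  shows "Re (fidc d N \<rho>) \<le> (\<Sum>a<d. \<Sum>b<d. \<Sum>p<d. \<Sum>q<d. cmod (K p q a b)) / real d"
proof -
  define S where "S = (\<Sum>a<d. \<Sum>b<d. \<Sum>p<d. \<Sum>q<d. \<rho> $$ (a*d+p, b*d+q) * K p q a b)"
  have f: "fidc d N \<rho> = S / of_nat d" unfolding fidc_def S_def by (rule fid_formula[OF \<rho> d0 lin])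
  have "Re S \<le> cmod S" by (rule complex_Re_le_cmod)
  also have "\<dots> \<le> (\<Sum>a<d. \<Sum>b<d. \<Sum>p<d. \<Sum>q<d. cmod (\<rho> $$ (a*d+p, b*d+q) * K p q a b))"
    unfolding S_def by (rule norm_sum4)
  also have "\<dots> \<le> (\<Sum>a<d. \<Sum>b<d. \<Sum>p<d. \<Sum>q<d. cmod (K p q a b))"
  proof (intro sum_mono)
    fix a b p q assume "a \<in> {..<d}" "b \<in> {..<d}" "p \<in> {..<d}" "q \<in> {..<d}"
    then have i: "a*d+p < d*d" and j: "b*d+q < d*d" by (auto intro: idx_bound)
    have "cmod (\<rho> $$ (a*d+p, b*d+q) * K p q a b) = cmod (\<rho> $$ (a*d+p, b*d+q)) * cmod (K p q a b)"
      by (rule norm_mult)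
    also have "\<dots> \<le> cmod (K p q a b)" by (rule mult_left_le_one_le) (use bd[OF i j] in auto)
    finally show "cmod (\<rho> $$ (a*d+p, b*d+q) * K p q a b) \<le> cmod (K p q a b)" .
  qed
  finally have "Re S \<le> (\<Sum>a<d. \<Sum>b<d. \<Sum>p<d. \<Sum>q<d. cmod (K p q a b))" .
  moreover have "Re (fidc d N \<rho>) = Re S / real d" unfolding f by (simp add: Re_divide_of_nat)
  ultimately show ?thesis using d0 by (simp add: divide_right_mono)
qed

lemma entry_bound:
  assumes "psd N A" "Re (mtrace (A*A)) \<le> 1" "i < N" "j < N"
  shows "cmod (A $$ (i,j)) \<le> 1"
proof -
  have e: "Re (mtrace (A*A)) = (\<Sum>n<N. \<Sum>m<N. (cmod (A $$ (n,m)))^2)"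
    unfolding purity_psd[OF assms(1)] by simp
  have "(cmod (A $$ (i,j)))^2 \<le> (\<Sum>m<N. (cmod (A $$ (i,m)))^2)"
    by (rule member_le_sum[where f = "\<lambda>m. (cmod (A $$ (i,m)))^2"]) (use assms in auto)
  also have "\<dots> \<le> (\<Sum>n<N. \<Sum>m<N. (cmod (A $$ (n,m)))^2)"
    by (rule member_le_sum[where f = "\<lambda>n. \<Sum>m<N. (cmod (A $$ (n,m)))^2"]) (use assms in \<open>auto intro: sum_nonneg\<close>)
  finally have "(cmod (A $$ (i,j)))^2 \<le> 1" using e assms(2) by linarith
  then show ?thesis by (simp add: power_le_one_iff abs_le_square_iff)
qed

lemma fid_nonneg:
  assumes ch: "channel d N" and \<rho>: "density_op (d*d) \<rho>"
  shows "0 \<le> Re (fidc d N \<rho>)"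
proof -
  have "psd (d*d) \<rho>" using \<rho> unfolding density_op_def by blast
  then have p: "psd (d*d) (id_tensor d d N \<rho>)" using ch unfolding channel_def by blast
  have "max_ent d \<in> carrier_vec (d*d)" unfolding max_ent_def by simp
  then show ?thesis using p unfolding psd_def fidc_def by blast
qed

definition mm :: "nat \<Rightarrow> complex mat" where
  "mm d = mat (d*d) (d*d) (\<lambda>(i,j). if i = j then complex_of_real (1 / (real d * real d)) else 0)"

lemma mm_props:
  assumes d0: "0 < d"
  shows "density_op (d*d) (mm d)" "Re (mtrace (mm d * mm d)) = 1 / real d ^ 2"
proof -
  have c: "mm d \<in> carrier_mat (d*d) (d*d)" unfolding mm_def by simp
  define z where "z s p = (if p = s then complex_of_real (1 / real d) else 0)" for s p :: nat
  have "\<forall>p<d*d. \<forall>q<d*d. mm d $$ (p,q) = (\<Sum>s\<in>{..<d*d}. z s p * cnj (z s q))"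
  proof (intro allI impI)
    fix p q assume p: "p < d*d" and q: "q < d*d"
    have "(\<Sum>s\<in>{..<d*d}. z s p * cnj (z s q)) = (\<Sum>s\<in>{..<d*d}. if s = p then (if p = q then complex_of_real (1 / (real d * real d)) else 0) else 0)"
      by (intro sum.cong refl) (auto simp: z_def)
    also have "\<dots> = (if p = q then complex_of_real (1 / (real d * real d)) else 0)" using p by simp
    finally show "mm d $$ (p,q) = (\<Sum>s\<in>{..<d*d}. z s p * cnj (z s q))" unfolding mm_def using p q by simp
  qed
  then have "fpsd (d*d) (\<lambda>p q. mm d $$ (p,q))" by (intro fpsd_gram[of "{..<d*d}"]) auto
  then have ps: "psd (d*d) (mm d)" by (rule fpsd_imp_psd[OF c])
  have "mtrace (mm d) = (\<Sum>i<d*d. complex_of_real (1 / (real d * real d)))"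
    unfolding mtrace_def mm_def by simp
  also have "\<dots> = 1" using d0 by simp
  finally show "density_op (d*d) (mm d)" unfolding density_op_def using ps by simp
  have "mtrace (mm d * mm d) = (\<Sum>n<d*d. \<Sum>m<d*d. mm d $$ (n,m) * mm d $$ (m,n))"
    by (rule mtrace_sq[OF c])
  also have "\<dots> = (\<Sum>n<d*d. complex_of_real (1 / (real d * real d)) * complex_of_real (1 / (real d * real d)))"
  proof (intro sum.cong refl)
    fix n assume n: "n \<in> {..<d*d}"
    have "(\<Sum>m<d*d. mm d $$ (n,m) * mm d $$ (m,n)) = (\<Sum>m<d*d. if m = n then complex_of_real (1 / (real d * real d)) * complex_of_real (1 / (real d * real d)) else 0)"
      by (intro sum.cong refl) (use n in \<open>auto simp: mm_def\<close>)
    also have "\<dots> = complex_of_real (1 / (real d * real d)) * complex_of_real (1 / (real d * real d))" using n by simp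
    finally show "(\<Sum>m<d*d. mm d $$ (n,m) * mm d $$ (m,n)) = complex_of_real (1 / (real d * real d)) * complex_of_real (1 / (real d * real d))" .
  qed
  also have "\<dots> = complex_of_real (\<Sum>n<d*d. (1 / (real d * real d)) * (1 / (real d * real d)))"
    by (simp only: of_real_mult of_real_sum)
  finally have "Re (mtrace (mm d * mm d)) = (\<Sum>n<d*d. (1 / (real d * real d)) * (1 / (real d * real d)))"
    by simp
  also have "\<dots> = real (d*d) * ((1 / (real d * real d)) * (1 / (real d * real d)))" by simp
  also have "\<dots> = 1 / real d ^ 2" using d0 by (simp add: power2_eq_square)
  finally show "Re (mtrace (mm d * mm d)) = 1 / real d ^ 2" .
qed

lemma sup_prod:
  fixes A B C :: "real set"
  assumes A: "A \<noteq> {}" "bdd_above A" "\<forall>x\<in>A. 0 \<le> x"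
    and B: "B \<noteq> {}" "bdd_above B" "\<forall>y\<in>B. 0 \<le> y"
    and C: "bdd_above C" and AB: "\<forall>x\<in>A. \<forall>y\<in>B. x*y \<in> C"
  shows "Sup A * Sup B \<le> Sup C"
proof -
  obtain x0 where x0: "x0 \<in> A" using A by blast
  obtain y0 where y0: "y0 \<in> B" using B by blast
  have xy: "x*y \<le> Sup C" if "x \<in> A" "y \<in> B" for x y using AB that C by (auto intro: cSup_upper)
  have SA: "0 \<le> Sup A" using x0 A cSup_upper[of x0 A] by force
  have C0: "0 \<le> Sup C" using xy[OF x0 y0] A(3) B(3) x0 y0 by (meson mult_nonneg_nonneg order_trans)
  have yb: "Sup A * y \<le> Sup C" if y: "y \<in> B" for y
  proof (cases "y = 0")
    case True then show ?thesis using C0 by simp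
  next
    case False
    then have yp: "0 < y" using B(3) y by force
    have "Sup A \<le> Sup C / y"
      by (rule cSup_least[OF A(1)]) (use xy[OF _ y] yp in \<open>simp add: pos_le_divide_eq\<close>)
    then show ?thesis using yp by (simp add: pos_le_divide_eq)
  qed
  show ?thesis
  proof (cases "Sup A = 0")
    case True then show ?thesis using C0 by simp
  next
    case False
    then have ap: "0 < Sup A" using SA by simp
    have "Sup B \<le> Sup C / Sup A"
      by (rule cSup_least[OF B(1)]) (use yb ap in \<open>simp add: pos_le_divide_eq mult.commute\<close>)
    then show ?thesis using ap by (simp add: pos_le_divide_eq mult.commute)
  qed
qed



lemma cnj_eq_Im: "cnj z = z \<Longrightarrow> Im z = 0"
  by (simp add: complex_eq_iff)

lemma fpsd_qf_real:
  assumes f: "fpsd n f"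
  shows "Im (\<Sum>p<n. \<Sum>q<n. f p q * v q * cnj (v p)) = 0"
proof -
  let ?Q = "\<Sum>p<n. \<Sum>q<n. f p q * v q * cnj (v p)"
  have "cnj ?Q = (\<Sum>p<n. \<Sum>q<n. cnj (f p q) * cnj (v q) * v p)" by simp
  also have "\<dots> = (\<Sum>p<n. \<Sum>q<n. f q p * v p * cnj (v q))"
  proof (intro sum.cong refl)
    fix p q assume "p \<in> {..<n}" "q \<in> {..<n}"
    then have "f q p = cnj (f p q)" using fpsd_herm[OF f, of q p] by simp
    then show "cnj (f p q) * cnj (v q) * v p = f q p * v p * cnj (v q)" by (simp add: mult_ac)
  qed
  also have "\<dots> = ?Q" by (rule sum.swap)
  finally have "cnj ?Q = ?Q" .
  then show ?thesis by (rule cnj_eq_Im)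
qed

lemma fid_real:
  assumes ch: "channel d N" and \<rho>: "density_op (d*d) \<rho>"
  shows "Im (fidc d N \<rho>) = 0"
proof -
  have "psd (d*d) \<rho>" using \<rho> unfolding density_op_def by blast
  then have p: "psd (d*d) (id_tensor d d N \<rho>)" using ch unfolding channel_def by blast
  have v: "max_ent d \<in> carrier_vec (d*d)" unfolding max_ent_def by simp
  have "fidc d N \<rho> = (\<Sum>p<d*d. \<Sum>q<d*d. id_tensor d d N \<rho> $$ (p,q) * max_ent d $ q * cnj (max_ent d $ p))"
    unfolding fidc_def by (rule qf_expand[OF psd_imp_fpsd(1)[OF p] v])
  then show ?thesis using fpsd_qf_real[OF psd_imp_fpsd(2)[OF p]] by simp
qed

definition fidset :: "nat \<Rightarrow> (complex mat \<Rightarrow> complex mat) \<Rightarrow> real \<Rightarrow> real set" where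
  "fidset d N s = {Re (fidc d N \<rho>) | \<rho>. density_op (d*d) \<rho> \<and> Re (mtrace (\<rho> * \<rho>)) \<le> s}"

lemma O_val_fidset: "O_val d N s = Sup (fidset d N s)"
  unfolding O_val_def fidset_def fidc_def ..

lemma fidset_bdd:
  assumes d0: "0 < d" and s1: "s \<le> 1"
    and lin: "\<And>Y a b. Y \<in> carrier_mat d d \<Longrightarrow> a < d \<Longrightarrow> b < d \<Longrightarrow>
       N Y $$ (a,b) = (\<Sum>p<d. \<Sum>q<d. Y $$ (p,q) * K p q a b)"
  shows "bdd_above (fidset d N s)"
proof (rule bdd_aboveI)
  fix x assume "x \<in> fidset d N s"
  then obtain \<rho> where x: "x = Re (fidc d N \<rho>)" and \<rho>: "density_op (d*d) \<rho>" and pu: "Re (mtrace (\<rho> * \<rho>)) \<le> s"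
    unfolding fidset_def by blast
  have ps: "psd (d*d) \<rho>" using \<rho> unfolding density_op_def by blast
  have c: "\<rho> \<in> carrier_mat (d*d) (d*d)" using ps unfolding psd_def by blast
  have "Re (fidc d N \<rho>) \<le> (\<Sum>a<d. \<Sum>b<d. \<Sum>p<d. \<Sum>q<d. cmod (K p q a b)) / real d"
  proof (rule fid_bound[OF c d0])
    show "\<And>Y a b. Y \<in> carrier_mat d d \<Longrightarrow> a < d \<Longrightarrow> b < d \<Longrightarrow>
       N Y $$ (a,b) = (\<Sum>p<d. \<Sum>q<d. Y $$ (p,q) * K p q a b)" by (fact lin)
    show "\<And>i j. i < d*d \<Longrightarrow> j < d*d \<Longrightarrow> cmod (\<rho> $$ (i,j)) \<le> 1"
      by (rule entry_bound[OF ps]) (use pu s1 in auto)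
  qed
  then show "x \<le> (\<Sum>a<d. \<Sum>b<d. \<Sum>p<d. \<Sum>q<d. cmod (K p q a b)) / real d" using x by simp
qed

lemma fidset_nonneg: "channel d N \<Longrightarrow> \<forall>x\<in>fidset d N s. 0 \<le> x"
  unfolding fidset_def using fid_nonneg by blast

lemma fidset_ne:
  assumes "0 < d" "1 / real d ^ 2 \<le> s"
  shows "fidset d N s \<noteq> {}"
proof -
  have "Re (fidc d N (mm d)) \<in> fidset d N s"
    unfolding fidset_def using mm_props[OF assms(1)] assms(2) by auto
  then show ?thesis by blast
qed

lemma main_ineq:
  assumes d1: "0 < d1" and d2: "0 < d2" and ch1: "channel d1 N1" and ch2: "channel d2 N2"
    and s1: "s \<le> 1" and st: "s * s \<le> t" and t1: "t \<le> 1"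
    and sd1: "1 / real d1 ^ 2 \<le> s" and sd2: "1 / real d2 ^ 2 \<le> s"
  shows "O_val d1 N1 s * O_val d2 N2 s \<le> O_val (d1*d2) (chan_tensor d1 d2 N1 N2) t"
  unfolding O_val_fidset
proof (rule sup_prod)
  show "fidset d1 N1 s \<noteq> {}" by (rule fidset_ne[OF d1 sd1])
  show "fidset d2 N2 s \<noteq> {}" by (rule fidset_ne[OF d2 sd2])
  show "bdd_above (fidset d1 N1 s)" by (rule fidset_bdd[OF d1 s1 chan_lin[OF ch1]])
  show "bdd_above (fidset d2 N2 s)" by (rule fidset_bdd[OF d2 s1 chan_lin[OF ch2]])
  show "\<forall>x\<in>fidset d1 N1 s. 0 \<le> x" by (rule fidset_nonneg[OF ch1])
  show "\<forall>x\<in>fidset d2 N2 s. 0 \<le> x" by (rule fidset_nonneg[OF ch2])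
  have D: "0 < d1*d2" using d1 d2 by simp
  show "bdd_above (fidset (d1*d2) (chan_tensor d1 d2 N1 N2) t)"
    by (rule fidset_bdd[OF D t1 ct_lin[OF ch1 ch2 d2]])
  show "\<forall>x\<in>fidset d1 N1 s. \<forall>y\<in>fidset d2 N2 s. x * y \<in> fidset (d1*d2) (chan_tensor d1 d2 N1 N2) t"
  proof (intro ballI)
    fix x y assume "x \<in> fidset d1 N1 s" "y \<in> fidset d2 N2 s"
    then obtain \<rho>1 \<rho>2 where x: "x = Re (fidc d1 N1 \<rho>1)" and r1: "density_op (d1*d1) \<rho>1"
        and pu1: "Re (mtrace (\<rho>1 * \<rho>1)) \<le> s"
      and y: "y = Re (fidc d2 N2 \<rho>2)" and r2: "density_op (d2*d2) \<rho>2"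
        and pu2: "Re (mtrace (\<rho>2 * \<rho>2)) \<le> s"
      unfolding fidset_def by blast
    have ps1: "psd (d1*d1) \<rho>1" and tr1: "mtrace \<rho>1 = 1" using r1 unfolding density_op_def by blast+
    have ps2: "psd (d2*d2) \<rho>2" and tr2: "mtrace \<rho>2 = 1" using r2 unfolding density_op_def by blast+
    have c1: "\<rho>1 \<in> carrier_mat (d1*d1) (d1*d1)" using ps1 unfolding psd_def by blast
    have c2: "\<rho>2 \<in> carrier_mat (d2*d2) (d2*d2)" using ps2 unfolding psd_def by blast
    define P where "P = prod_state d1 d2 \<rho>1 \<rho>2"
    have dP: "density_op (d1*d2*(d1*d2)) P"
      unfolding density_op_def P_def using prod_psd[OF d1 d2 ps1 ps2] prod_trace[OF d1 d2 c1 c2] tr1 tr2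
      by simp
    define u1 where "u1 = (\<Sum>n<d1*d1. \<Sum>m<d1*d1. (cmod (\<rho>1 $$ (n,m)))^2)"
    define u2 where "u2 = (\<Sum>n<d2*d2. \<Sum>m<d2*d2. (cmod (\<rho>2 $$ (n,m)))^2)"
    have u1: "mtrace (\<rho>1 * \<rho>1) = of_real u1" unfolding u1_def by (rule purity_psd[OF ps1])
    have u2: "mtrace (\<rho>2 * \<rho>2) = of_real u2" unfolding u2_def by (rule purity_psd[OF ps2])
    have u10: "0 \<le> u1" unfolding u1_def by (intro sum_nonneg) auto
    have u20: "0 \<le> u2" unfolding u2_def by (intro sum_nonneg) auto
    have "Re (mtrace (P * P)) = u1 * u2"
      unfolding P_def prod_purity[OF d1 d2 c1 c2] u1 u2 by (simp flip: of_real_mult)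
    also have "\<dots> \<le> s * s" using pu1 pu2 u1 u2 u10 u20 by (simp add: mult_mono)
    also have "\<dots> \<le> t" by (rule st)
    finally have puP: "Re (mtrace (P * P)) \<le> t" .
    have "fidc (d1*d2) (chan_tensor d1 d2 N1 N2) P = fidc d1 N1 \<rho>1 * fidc d2 N2 \<rho>2"
      unfolding P_def by (rule prod_fid[OF d1 d2 ch1 ch2 c1 c2])
    then have "Re (fidc (d1*d2) (chan_tensor d1 d2 N1 N2) P) = x * y"
      using fid_real[OF ch1 r1] fid_real[OF ch2 r2] x y by simp
    then show "x * y \<in> fidset (d1*d2) (chan_tensor d1 d2 N1 N2) t"
      unfolding fidset_def using dP puP by force
  qed
qed


theorem mainTheorem7:
  fixes d1 d2 :: nat and N1 N2 :: "complex mat \<Rightarrow> complex mat" and t :: real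
  assumes "0 < d1" and "0 < d2"
    and "channel d1 N1" and "channel d2 N2"
    and "0 < t" and "t \<le> 1"
  shows "(t \<ge> max (1 / real d1 ^ 2) (1 / real d2 ^ 2) \<longrightarrow>
           O_val (d1 * d2) (chan_tensor d1 d2 N1 N2) t \<ge> O_val d1 N1 t * O_val d2 N2 t)
       \<and> (sqrt t \<ge> max (1 / real d1 ^ 2) (1 / real d2 ^ 2) \<longrightarrow>
           O_val (d1 * d2) (chan_tensor d1 d2 N1 N2) t \<ge> O_val d1 N1 (sqrt t) * O_val d2 N2 (sqrt t))"
proof (intro conjI impI)
  assume m: "t \<ge> max (1 / real d1 ^ 2) (1 / real d2 ^ 2)"
  have tt: "t * t \<le> t" using assms(5,6) by (simp add: mult_left_le_one_le)
  show "O_val (d1 * d2) (chan_tensor d1 d2 N1 N2) t \<ge> O_val d1 N1 t * O_val d2 N2 t"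
    by (rule main_ineq[OF assms(1-4) assms(6) tt assms(6)]) (use m in auto)
next
  assume m: "sqrt t \<ge> max (1 / real d1 ^ 2) (1 / real d2 ^ 2)"
  have s1: "sqrt t \<le> 1" using assms(6) by simp
  have tt: "sqrt t * sqrt t \<le> t" using assms(5) by simp
  show "O_val (d1 * d2) (chan_tensor d1 d2 N1 N2) t \<ge> O_val d1 N1 (sqrt t) * O_val d2 N2 (sqrt t)"
    by (rule main_ineq[OF assms(1-4) s1 tt assms(6)]) (use m in auto)
qed

end
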